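(* Let $d,n\ge1$. Let $x^{(1)},\dots,x^{(n)}\in\mathbb{R}^d$ be i.i.d. $\mathcal{N}(0,I_d)$, $w_\star\sim\mathcal{N}(0,I_d)$ independent, $y^{(i)}=\langle w_\star,x^{(i)}\rangle$, $z^{(i)}=\begin{bmatrix}x^{(i)}\\ y^{(i)}\end{bmatrix}\in\mathbb{R}^{d+1}$, and $C=\frac1n\sum_{i=1}^n z^{(i)}{z^{(i)}}^\top$. Fix $j\in\{1,\dots,d\}$ and for $X\in\mathbb{R}^{(d+1)\times(d+1)}$ define $$f_j(X)=\mathbb{E}\big[(\langle C,X\rangle+w_\star[j])^2\big],\qquad \langle C,X\rangle=\mathrm{tr}(CX^\top).$$ Then a global minimum of $f_j$ is $$X_j=-\frac{1}{\frac{n-1}{n}+\frac{d+2}{n}}\,E_{d+1,j},$$ where $E_{d+1,j}$ is the matrix whose $(d+1,j)$ entry is $1$ and all other entries are $0$.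
   Context: $w_\star[j]$ denotes the $j$-th coordinate of $w_\star$. *)

theory Defs
  imports "HOL-Probability.Probability"
begin

definition std_gauss :: "real measure" where
  "std_gauss = density lborel std_normal_density"

text \<open>Sample space: the data matrix (entries x^(i)[k], i in 1..n, k in 1..d, all i.i.d. N(0,1))
  together with w_star (coordinates k in 1..d, i.i.d. N(0,1)), independent of the data.\<close>
definition model :: "nat \<Rightarrow> nat \<Rightarrow> ((nat \<times> nat \<Rightarrow> real) \<times> (nat \<Rightarrow> real)) measure" where
  "model n d = (PiM ({1..n} \<times> {1..d}) (\<lambda>_. std_gauss)) \<Otimes>\<^sub>M (PiM {1..d} (\<lambda>_. std_gauss))"

text \<open>z^(i) in R^(d+1), coordinates 1..d+1: z^(i)[k] = x^(i)[k] for k \<le> d, z^(i)[d+1] = y^(i) = <w_star, x^(i)>.\<close>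
definition zvec :: "nat \<Rightarrow> (nat \<times> nat \<Rightarrow> real) \<times> (nat \<Rightarrow> real) \<Rightarrow> nat \<Rightarrow> nat \<Rightarrow> real" where
  "zvec d \<omega> i k = (if k \<le> d then fst \<omega> (i, k) else (\<Sum>l = 1..d. snd \<omega> l * fst \<omega> (i, l)))"

definition Cmat :: "nat \<Rightarrow> nat \<Rightarrow> (nat \<times> nat \<Rightarrow> real) \<times> (nat \<Rightarrow> real) \<Rightarrow> nat \<Rightarrow> nat \<Rightarrow> real" where
  "Cmat n d \<omega> a b = (1 / real n) * (\<Sum>i = 1..n. zvec d \<omega> i a * zvec d \<omega> i b)"

definition frob :: "nat \<Rightarrow> (nat \<Rightarrow> nat \<Rightarrow> real) \<Rightarrow> (nat \<Rightarrow> nat \<Rightarrow> real) \<Rightarrow> real" where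
  "frob d C X = (\<Sum>a = 1..d+1. \<Sum>b = 1..d+1. C a b * X a b)"

definition fobj :: "nat \<Rightarrow> nat \<Rightarrow> nat \<Rightarrow> (nat \<Rightarrow> nat \<Rightarrow> real) \<Rightarrow> real" where
  "fobj n d j X = (\<integral>\<omega>. (frob d (Cmat n d \<omega>) X + snd \<omega> j)\<^sup>2 \<partial>model n d)"

definition Eunit :: "nat \<Rightarrow> nat \<Rightarrow> nat \<Rightarrow> nat \<Rightarrow> real" where
  "Eunit a b = (\<lambda>p q. if p = a \<and> q = b then 1 else 0)"

end

theory Submission
  imports Defs
begin

lemma gauss_prob: "prob_space std_gauss"
  unfolding std_gauss_def by (rule prob_space_normal_density) simp

lemma gauss_int: "integrable std_gauss (\<lambda>t. t ^ k)"
  unfolding std_gauss_def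
  by (subst integrable_density) (auto intro: integrable_std_normal_moment)

definition gm :: "nat \<Rightarrow> real" where "gm k = integral\<^sup>L std_gauss (\<lambda>t. t ^ k)"

lemma gm_even: "gm (2*k) = fact (2 * k) / (2^k * fact k)"
  unfolding gm_def std_gauss_def
  by (subst integral_density) (auto simp: integral_std_normal_moment_even)

lemma gm_odd: "gm (2*k+1) = 0"
  unfolding gm_def std_gauss_def
  using integral_std_normal_moment_odd[of k] by (subst integral_density) simp_all

lemma gm_oddI: "odd m \<Longrightarrow> gm m = 0"
  by (metis gm_odd oddE)

lemma gm_vals[simp]: "gm 0 = 1" "gm 1 = 0" "gm 2 = 1" "gm 3 = 0" "gm 4 = 3"
  using gm_even[of 0] gm_even[of 1] gm_even[of 2] gm_odd[of 0] gm_odd[of 1]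
  by (simp_all add: fact_numeral)

lemma gm_Suc[simp]: "gm (Suc 0) = 0" "gm (Suc (Suc 0)) = 1" "gm (Suc (Suc (Suc 0))) = 0" "gm (Suc (Suc (Suc (Suc 0)))) = 3"
  using gm_vals by (simp_all add: numeral_eq_Suc)

lemma pair_indep:
  assumes "prob_space M1" "prob_space M2" "integrable M1 f" "integrable M2 g"
  shows "integrable (M1 \<Otimes>\<^sub>M M2) (\<lambda>\<omega>. f (fst \<omega>) * (g (snd \<omega>) :: real))"
    and "integral\<^sup>L (M1 \<Otimes>\<^sub>M M2) (\<lambda>\<omega>. f (fst \<omega>) * g (snd \<omega>)) = integral\<^sup>L M1 f * integral\<^sup>L M2 g"
proof -
  interpret p1: prob_space M1 by fact
  interpret p2: prob_space M2 by fact
  interpret pair_sigma_finite M1 M2 by unfold_locales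
  have [measurable]: "f \<in> borel_measurable M1" "g \<in> borel_measurable M2" using assms by auto
  show i: "integrable (M1 \<Otimes>\<^sub>M M2) (\<lambda>\<omega>. f (fst \<omega>) * g (snd \<omega>))"
  proof (rule Fubini_integrable)
    show "(\<lambda>\<omega>. f (fst \<omega>) * g (snd \<omega>)) \<in> borel_measurable (M1 \<Otimes>\<^sub>M M2)" by measurable
    have "(\<lambda>x. \<integral>y. norm (f (fst (x, y)) * g (snd (x, y))) \<partial>M2) = (\<lambda>x. norm (f x) * \<integral>y. norm (g y) \<partial>M2)"
      by (simp add: abs_mult)
    then show "integrable M1 (\<lambda>x. \<integral>y. norm (f (fst (x, y)) * g (snd (x, y))) \<partial>M2)"
      using assms(3) by simp
    show "AE x in M1. integrable M2 (\<lambda>y. f (fst (x, y)) * g (snd (x, y)))"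
      using assms(4) by simp
  qed
  have "integral\<^sup>L (M1 \<Otimes>\<^sub>M M2) (\<lambda>\<omega>. f (fst \<omega>) * g (snd \<omega>)) = (\<integral>x. (\<integral>y. f x * g y \<partial>M2) \<partial>M1)"
    using integral_fst[of "\<lambda>x y. f x * g y"] i by (simp add: case_prod_beta')
  also have "\<dots> = integral\<^sup>L M1 f * integral\<^sup>L M2 g" by simp
  finally show "integral\<^sup>L (M1 \<Otimes>\<^sub>M M2) (\<lambda>\<omega>. f (fst \<omega>) * g (snd \<omega>)) = integral\<^sup>L M1 f * integral\<^sup>L M2 g" .
qed

lemma prod_list_count:
  assumes "finite I" "set ks \<subseteq> I"
  shows "prod_list (map x ks) = (\<Prod>t\<in>I. (x t :: real) ^ count (mset ks) t)"
  using assms(2)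
proof (induction ks)
  case Nil then show ?case by simp
next
  case (Cons k ks)
  have kI: "k \<in> I" using Cons by auto
  have "(\<Prod>t\<in>I. x t ^ count (mset (k # ks)) t) = (\<Prod>t\<in>I. (if t = k then x t else 1) * x t ^ count (mset ks) t)"
    by (intro prod.cong) auto
  also have "\<dots> = x k * (\<Prod>t\<in>I. x t ^ count (mset ks) t)"
    using kI assms(1) by (simp add: prod.distrib)
  finally show ?case using Cons by simp
qed

lemma sum_count:
  assumes "finite I" "set ks \<subseteq> I"
  shows "(\<Sum>t\<in>I. count (mset ks) t) = length ks"
  using assms(2)
proof (induction ks)
  case Nil then show ?case by simp
next
  case (Cons k ks)
  have kI: "k \<in> I" using Cons by auto
  have "(\<Sum>t\<in>I. count (mset (k # ks)) t) = (\<Sum>t\<in>I. (if t = k then 1 else 0) + count (mset ks) t)"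
    by (intro sum.cong) auto
  also have "\<dots> = 1 + (\<Sum>t\<in>I. count (mset ks) t)"
    using kI assms(1) by (simp add: sum.distrib)
  finally show ?case using Cons by simp
qed

abbreviation GP :: "'i set \<Rightarrow> ('i \<Rightarrow> real) measure" where
  "GP I \<equiv> PiM I (\<lambda>_. std_gauss)"

lemma GP_prob: "finite I \<Longrightarrow> prob_space (GP I)"
  by (intro prob_space_PiM gauss_prob)

lemma GP_mono:
  assumes "finite I" "set ks \<subseteq> I"
  shows "integrable (GP I) (\<lambda>x. prod_list (map x ks))"
    and "integral\<^sup>L (GP I) (\<lambda>x. prod_list (map x ks)) = (\<Prod>t\<in>I. gm (count (mset ks) t))"
proof -
  interpret product_sigma_finite "\<lambda>_. std_gauss"
    unfolding product_sigma_finite_def using gauss_prob prob_space_imp_sigma_finite by blast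
  have eq: "(\<lambda>x. prod_list (map x ks)) = (\<lambda>x. \<Prod>t\<in>I. (x t :: real) ^ count (mset ks) t)"
    by (intro ext) (rule prod_list_count[OF assms])
  show "integrable (GP I) (\<lambda>x. prod_list (map x ks))"
    unfolding eq by (rule product_integrable_prod[OF assms(1)]) (rule gauss_int)
  show "integral\<^sup>L (GP I) (\<lambda>x. prod_list (map x ks)) = (\<Prod>t\<in>I. gm (count (mset ks) t))"
    unfolding eq gm_def by (rule product_integral_prod[OF assms(1)]) (rule gauss_int)
qed

lemma GP_odd:
  assumes "finite I" "set ks \<subseteq> I" "odd (length ks)"
  shows "integral\<^sup>L (GP I) (\<lambda>x. prod_list (map x ks)) = 0"
proof -
  have "\<exists>t\<in>I. odd (count (mset ks) t)"
  proof (rule ccontr)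
    assume "\<not> ?thesis"
    then have "even (\<Sum>t\<in>I. count (mset ks) t)" by (auto intro!: dvd_sum)
    then show False using sum_count[OF assms(1,2)] assms(3) by simp
  qed
  then obtain t where "t \<in> I" "odd (count (mset ks) t)" by blast
  then have "\<exists>t\<in>I. gm (count (mset ks) t) = 0" using gm_oddI by blast
  then show ?thesis using GP_mono(2)[OF assms(1,2)] assms(1) by simp
qed

lemma GP_restrict:
  assumes "finite I" "set ks \<subseteq> I"
  shows "(\<Prod>t\<in>I. gm (count (mset ks) t)) = (\<Prod>t\<in>set ks. gm (count (mset ks) t))"
proof (rule prod.mono_neutral_right[OF assms(1,2)])
  show "\<forall>i\<in>I - set ks. gm (count (mset ks) i) = 1"
  proof
    fix i assume "i \<in> I - set ks"
    then have "count (mset ks) i = 0" by simp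
    then show "gm (count (mset ks) i) = 1" by (simp only: gm_vals(1))
  qed
qed

lemma GP_two:
  assumes "finite I" "p \<in> I" "q \<in> I"
  shows "integral\<^sup>L (GP I) (\<lambda>x. prod_list (map x [p,q])) = (if p = q then 1 else 0)"
proof -
  have S: "set [p,q] \<subseteq> I" using assms by auto
  show ?thesis using GP_mono(2)[OF assms(1) S] GP_restrict[OF assms(1) S]
    by (cases "p = q"; simp)
qed

lemma GP_four:
  assumes "finite I" "p \<in> I" "q \<in> I" "r \<in> I" "s \<in> I"
  shows "integral\<^sup>L (GP I) (\<lambda>x. prod_list (map x [p,q,r,s])) =
    (if p = q \<and> r = s then 1 else 0) + (if p = r \<and> q = s then 1 else 0) + (if p = s \<and> q = r then 1 else 0)"
proof -
  have S: "set [p,q,r,s] \<subseteq> I" using assms by auto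
  show ?thesis using GP_mono(2)[OF assms(1) S] GP_restrict[OF assms(1) S]
  by (cases "p=q"; cases "p=r"; cases "p=s"; cases "q=r"; cases "q=s"; cases "r=s"; simp add: insert_commute)
qed

definition mom :: "'a measure \<Rightarrow> ('a \<Rightarrow> real) \<Rightarrow> bool" where
  "mom M f \<longleftrightarrow> f \<in> borel_measurable M \<and> (\<forall>k::nat. integrable M (\<lambda>x. \<bar>f x\<bar> ^ k))"

lemma mom_integrable: "mom M f \<Longrightarrow> integrable M f"
proof -
  assume "mom M f"
  then have m: "f \<in> borel_measurable M" and "integrable M (\<lambda>x. \<bar>f x\<bar> ^ 1)" unfolding mom_def by blast+
  then have "integrable M (\<lambda>x. \<bar>f x\<bar>)" by simp
  then show ?thesis using integrable_abs_iff[OF m] by blast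
qed

lemma mom_const: assumes "prob_space M" shows "mom M (\<lambda>_. c)"
proof -
  interpret prob_space M by fact
  show ?thesis unfolding mom_def by auto
qed

lemma abs_add_pow: "\<bar>a + b\<bar> ^ k \<le> 2 ^ k * (\<bar>a\<bar> ^ k + \<bar>b\<bar> ^ k :: real)"
proof -
  have m: "max \<bar>a\<bar> \<bar>b\<bar> ^ k \<le> \<bar>a\<bar> ^ k + \<bar>b\<bar> ^ k"
    by (cases "\<bar>a\<bar> \<le> \<bar>b\<bar>") (simp_all add: max_def)
  have "\<bar>a + b\<bar> \<le> 2 * max \<bar>a\<bar> \<bar>b\<bar>" by linarith
  then have "\<bar>a + b\<bar> ^ k \<le> (2 * max \<bar>a\<bar> \<bar>b\<bar>) ^ k" by (intro power_mono) auto
  also have "\<dots> = 2 ^ k * max \<bar>a\<bar> \<bar>b\<bar> ^ k" by (simp add: power_mult_distrib)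
  also have "\<dots> \<le> 2 ^ k * (\<bar>a\<bar> ^ k + \<bar>b\<bar> ^ k)" using m by (intro mult_left_mono) auto
  finally show ?thesis .
qed

lemma abs_mult_pow: "\<bar>a * b\<bar> ^ k \<le> (\<bar>a\<bar> ^ (2*k) + \<bar>b\<bar> ^ (2*k) :: real)"
proof -
  have "\<bar>a * b\<bar> ^ k = \<bar>a\<bar> ^ k * \<bar>b\<bar> ^ k" by (simp add: abs_mult power_mult_distrib)
  also have "\<dots> \<le> (\<bar>a\<bar> ^ k)\<^sup>2 + (\<bar>b\<bar> ^ k)\<^sup>2"
  proof -
    have "2 * (\<bar>a\<bar> ^ k * \<bar>b\<bar> ^ k) \<le> (\<bar>a\<bar> ^ k)\<^sup>2 + (\<bar>b\<bar> ^ k)\<^sup>2" using sum_squares_bound[of "\<bar>a\<bar> ^ k" "\<bar>b\<bar> ^ k"] by (simp add: mult.assoc)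
    moreover have "0 \<le> \<bar>a\<bar> ^ k * \<bar>b\<bar> ^ k" by simp
    ultimately show ?thesis by linarith
  qed
  also have "\<dots> = \<bar>a\<bar> ^ (2*k) + \<bar>b\<bar> ^ (2*k)" by (simp add: power_mult[symmetric] mult.commute)
  finally show ?thesis .
qed

lemma mom_add: "mom M f \<Longrightarrow> mom M g \<Longrightarrow> mom M (\<lambda>x. f x + g x)"
  unfolding mom_def
proof (intro conjI allI; (elim conjE)?)
  fix k
  assume f: "f \<in> borel_measurable M" "\<forall>k. integrable M (\<lambda>x. \<bar>f x\<bar> ^ k)"
    and g: "g \<in> borel_measurable M" "\<forall>k. integrable M (\<lambda>x. \<bar>g x\<bar> ^ k)"
  show "(\<lambda>x. f x + g x) \<in> borel_measurable M" using f g by measurable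
  show "integrable M (\<lambda>x. \<bar>f x + g x\<bar> ^ k)"
  proof (rule Bochner_Integration.integrable_bound)
    show "integrable M (\<lambda>x. 2 ^ k * (\<bar>f x\<bar> ^ k + \<bar>g x\<bar> ^ k))"
      using f(2) g(2) by (intro integrable_mult_right Bochner_Integration.integrable_add) blast+
    show "(\<lambda>x. \<bar>f x + g x\<bar> ^ k) \<in> borel_measurable M" using f g by measurable
    show "AE x in M. norm (\<bar>f x + g x\<bar> ^ k) \<le> norm (2 ^ k * (\<bar>f x\<bar> ^ k + \<bar>g x\<bar> ^ k))"
    proof (intro AE_I2)
      fix x
      have "\<bar>f x + g x\<bar> ^ k \<le> 2 ^ k * (\<bar>f x\<bar> ^ k + \<bar>g x\<bar> ^ k)" by (rule abs_add_pow)
      then show "norm (\<bar>f x + g x\<bar> ^ k) \<le> norm (2 ^ k * (\<bar>f x\<bar> ^ k + \<bar>g x\<bar> ^ k))" by simp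
    qed
  qed
qed

lemma mom_mult: "mom M f \<Longrightarrow> mom M g \<Longrightarrow> mom M (\<lambda>x. f x * g x)"
  unfolding mom_def
proof (intro conjI allI; (elim conjE)?)
  fix k
  assume f: "f \<in> borel_measurable M" "\<forall>k. integrable M (\<lambda>x. \<bar>f x\<bar> ^ k)"
    and g: "g \<in> borel_measurable M" "\<forall>k. integrable M (\<lambda>x. \<bar>g x\<bar> ^ k)"
  show "(\<lambda>x. f x * g x) \<in> borel_measurable M" using f g by measurable
  show "integrable M (\<lambda>x. \<bar>f x * g x\<bar> ^ k)"
  proof (rule Bochner_Integration.integrable_bound)
    show "integrable M (\<lambda>x. \<bar>f x\<bar> ^ (2*k) + \<bar>g x\<bar> ^ (2*k))"
      using f(2) g(2) by (intro Bochner_Integration.integrable_add) blast+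
    show "(\<lambda>x. \<bar>f x * g x\<bar> ^ k) \<in> borel_measurable M" using f g by measurable
    show "AE x in M. norm (\<bar>f x * g x\<bar> ^ k) \<le> norm (\<bar>f x\<bar> ^ (2*k) + \<bar>g x\<bar> ^ (2*k))"
    proof (intro AE_I2)
      fix x
      have "\<bar>f x * g x\<bar> ^ k \<le> \<bar>f x\<bar> ^ (2*k) + \<bar>g x\<bar> ^ (2*k)" by (rule abs_mult_pow)
      then show "norm (\<bar>f x * g x\<bar> ^ k) \<le> norm (\<bar>f x\<bar> ^ (2*k) + \<bar>g x\<bar> ^ (2*k))" by simp
    qed
  qed
qed

lemma mom_sum: assumes "prob_space M" "finite A" "\<And>a. a \<in> A \<Longrightarrow> mom M (f a)" shows "mom M (\<lambda>x. \<Sum>a\<in>A. f a x)"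
  using assms(2,3) proof (induction A rule: finite_induct)
  case empty then show ?case using mom_const[OF assms(1)] by simp
next
  case (insert a A)
  have "mom M (\<lambda>x. f a x + (\<Sum>a\<in>A. f a x))"
    by (rule mom_add) (use insert in blast)+
  moreover have "(\<lambda>x. \<Sum>a\<in>insert a A. f a x) = (\<lambda>x. f a x + (\<Sum>a\<in>A. f a x))"
    by (intro ext) (rule sum.insert[OF insert(1,2)])
  ultimately show ?case by simp
qed

lemma mom_cmult: assumes "prob_space M" "mom M f" shows "mom M (\<lambda>x. c * f x)"
  using mom_mult[OF mom_const[OF assms(1)] assms(2)] .

lemma mom_diff: assumes "prob_space M" "mom M f" "mom M g" shows "mom M (\<lambda>x. f x - g x)"
proof -
  have "mom M (\<lambda>x. f x + (-1) * g x)" by (rule mom_add[OF assms(2) mom_cmult[OF assms(1,3)]])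
  then show ?thesis by simp
qed

lemma mom_pow2: assumes "mom M f" shows "mom M (\<lambda>x. (f x)\<^sup>2)"
  unfolding power2_eq_square by (rule mom_mult[OF assms assms])

abbreviation IX :: "nat \<Rightarrow> nat \<Rightarrow> (nat \<times> nat) set" where "IX n d \<equiv> {1..n} \<times> {1..d}"

lemma model_eq: "model n d = GP (IX n d) \<Otimes>\<^sub>M GP {1..d}"
  unfolding model_def ..

lemma model_prob: "prob_space (model n d)"
  unfolding model_def by (intro prob_space_pair GP_prob) auto

definition EXm :: "nat \<Rightarrow> nat \<Rightarrow> (nat \<times> nat) list \<Rightarrow> real" where
  "EXm n d ks = integral\<^sup>L (GP (IX n d)) (\<lambda>x. prod_list (map x ks))"
definition EWm :: "nat \<Rightarrow> nat list \<Rightarrow> real" where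
  "EWm d ls = integral\<^sup>L (GP {1..d}) (\<lambda>x. prod_list (map x ls))"

lemma model_mono:
  assumes "set ks \<subseteq> IX n d" "set ls \<subseteq> {1..d}"
  shows "integrable (model n d) (\<lambda>\<omega>. prod_list (map (fst \<omega>) ks) * prod_list (map (snd \<omega>) ls))"
    and "integral\<^sup>L (model n d) (\<lambda>\<omega>. prod_list (map (fst \<omega>) ks) * prod_list (map (snd \<omega>) ls)) = EXm n d ks * EWm d ls"
proof -
  have f: "finite (IX n d)" "finite {1..d}" by auto
  note P = pair_indep[OF GP_prob[OF f(1)] GP_prob[OF f(2)] GP_mono(1)[OF f(1) assms(1)] GP_mono(1)[OF f(2) assms(2)]]
  show "integrable (model n d) (\<lambda>\<omega>. prod_list (map (fst \<omega>) ks) * prod_list (map (snd \<omega>) ls))"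
    unfolding model_def by (rule P(1))
  show "integral\<^sup>L (model n d) (\<lambda>\<omega>. prod_list (map (fst \<omega>) ks) * prod_list (map (snd \<omega>) ls)) = EXm n d ks * EWm d ls"
    unfolding model_def EXm_def EWm_def by (rule P(2))
qed

lemma coordX_meas:
  assumes "p \<in> IX n d" shows "(\<lambda>\<omega>. fst \<omega> p) \<in> borel_measurable (model n d)"
proof -
  have "(\<lambda>\<omega>. fst \<omega> p) \<in> model n d \<rightarrow>\<^sub>M std_gauss"
    unfolding model_def by (rule measurable_compose[OF measurable_fst measurable_component_singleton[OF assms]])
  then show ?thesis by (simp add: std_gauss_def)
qed

lemma coordW_meas:
  assumes "l \<in> {1..d}" shows "(\<lambda>\<omega>. snd \<omega> l) \<in> borel_measurable (model n d)"
proof -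
  have "(\<lambda>\<omega>. snd \<omega> l) \<in> model n d \<rightarrow>\<^sub>M std_gauss"
    unfolding model_def by (rule measurable_compose[OF measurable_snd measurable_component_singleton[OF assms]])
  then show ?thesis by (simp add: std_gauss_def)
qed

lemma mom_coordX:
  assumes "p \<in> IX n d" shows "mom (model n d) (\<lambda>\<omega>. fst \<omega> p)"
  unfolding mom_def
proof (intro conjI allI)
  show "(\<lambda>\<omega>. fst \<omega> p) \<in> borel_measurable (model n d)" using coordX_meas[OF assms] .
  fix k
  have "integrable (model n d) (\<lambda>\<omega>. prod_list (map (fst \<omega>) (replicate (2*k) p)) * prod_list (map (snd \<omega>) []))"
    by (rule model_mono) (use assms in auto)
  then have i1: "integrable (model n d) (\<lambda>\<omega>. (fst \<omega> p) ^ (2*k))" by simp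
  interpret prob_space "model n d" by (rule model_prob)
  have i: "integrable (model n d) (\<lambda>\<omega>. 1 + (fst \<omega> p) ^ (2*k))"
    by (rule Bochner_Integration.integrable_add[OF integrable_const i1])
  show "integrable (model n d) (\<lambda>\<omega>. \<bar>fst \<omega> p\<bar> ^ k)"
  proof (rule Bochner_Integration.integrable_bound[OF i])
    show "(\<lambda>\<omega>. \<bar>fst \<omega> p\<bar> ^ k) \<in> borel_measurable (model n d)" using coordX_meas[OF assms] by measurable
    have "\<bar>u\<bar> ^ k \<le> 1 + u ^ (2*k)" for u :: real
    proof (cases "\<bar>u\<bar> \<le> 1")
      case True then have "\<bar>u\<bar> ^ k \<le> 1" by (simp add: power_le_one)
      moreover have "0 \<le> u ^ (2*k)" by (rule zero_le_even_power) simp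
      ultimately show ?thesis by linarith
    next
      case False then have "\<bar>u\<bar> ^ k \<le> \<bar>u\<bar> ^ (2*k)" by (intro power_increasing) auto
      then show ?thesis by (simp add: power_mult power_even_abs)
    qed
    then show "AE x in model n d. norm (\<bar>fst x p\<bar> ^ k) \<le> norm (1 + fst x p ^ (2 * k))"
      by (auto simp: power_mult)
  qed
qed

lemma mom_coordW:
  assumes "p \<in> {1..d}" shows "mom (model n d) (\<lambda>\<omega>. snd \<omega> p)"
  unfolding mom_def
proof (intro conjI allI)
  show "(\<lambda>\<omega>. snd \<omega> p) \<in> borel_measurable (model n d)" using coordW_meas[OF assms] .
  fix k
  have "integrable (model n d) (\<lambda>\<omega>. prod_list (map (fst \<omega>) []) * prod_list (map (snd \<omega>) (replicate (2*k) p)))"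
    by (rule model_mono) (use assms in auto)
  then have i1: "integrable (model n d) (\<lambda>\<omega>. (snd \<omega> p) ^ (2*k))" by simp
  interpret prob_space "model n d" by (rule model_prob)
  have i: "integrable (model n d) (\<lambda>\<omega>. 1 + (snd \<omega> p) ^ (2*k))"
    by (rule Bochner_Integration.integrable_add[OF integrable_const i1])
  show "integrable (model n d) (\<lambda>\<omega>. \<bar>snd \<omega> p\<bar> ^ k)"
  proof (rule Bochner_Integration.integrable_bound[OF i])
    show "(\<lambda>\<omega>. \<bar>snd \<omega> p\<bar> ^ k) \<in> borel_measurable (model n d)" using coordW_meas[OF assms] by measurable
    have "\<bar>u\<bar> ^ k \<le> 1 + u ^ (2*k)" for u :: real
    proof (cases "\<bar>u\<bar> \<le> 1")
      case True then have "\<bar>u\<bar> ^ k \<le> 1" by (simp add: power_le_one)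
      moreover have "0 \<le> u ^ (2*k)" by (rule zero_le_even_power) simp
      ultimately show ?thesis by linarith
    next
      case False then have "\<bar>u\<bar> ^ k \<le> \<bar>u\<bar> ^ (2*k)" by (intro power_increasing) auto
      then show ?thesis by (simp add: power_mult power_even_abs)
    qed
    then show "AE x in model n d. norm (\<bar>snd x p\<bar> ^ k) \<le> norm (1 + snd x p ^ (2 * k))"
      by (auto simp: power_mult)
  qed
qed

lemma EWm_one: "l \<in> {1..d} \<Longrightarrow> EWm d [l] = 0"
  unfolding EWm_def by (rule GP_odd) auto

lemma EWm_three: "l \<in> {1..d} \<Longrightarrow> m \<in> {1..d} \<Longrightarrow> p \<in> {1..d} \<Longrightarrow> EWm d [l,m,p] = 0"
  unfolding EWm_def by (rule GP_odd) auto

lemma EWm_two: "l \<in> {1..d} \<Longrightarrow> m \<in> {1..d} \<Longrightarrow> EWm d [l,m] = (if l = m then 1 else 0)"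
  unfolding EWm_def by (rule GP_two) auto

lemma EXm_two: "p \<in> IX n d \<Longrightarrow> q \<in> IX n d \<Longrightarrow> EXm n d [p,q] = (if p = q then 1 else 0)"
  unfolding EXm_def by (rule GP_two) auto

lemma EXm_four: "p \<in> IX n d \<Longrightarrow> q \<in> IX n d \<Longrightarrow> r \<in> IX n d \<Longrightarrow> s \<in> IX n d \<Longrightarrow> EXm n d [p,q,r,s] =
    (if p = q \<and> r = s then 1 else 0) + (if p = r \<and> q = s then 1 else 0) + (if p = s \<and> q = r then 1 else 0)"
  unfolding EXm_def by (rule GP_four) auto

lemma model_sum1:
  assumes "finite A" "\<And>a. a \<in> A \<Longrightarrow> set (ks a) \<subseteq> IX n d" "\<And>a. a \<in> A \<Longrightarrow> set (ls a) \<subseteq> {1..d}"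
  shows "integral\<^sup>L (model n d) (\<lambda>\<omega>. \<Sum>a\<in>A. prod_list (map (fst \<omega>) (ks a)) * prod_list (map (snd \<omega>) (ls a)))
       = (\<Sum>a\<in>A. EXm n d (ks a) * EWm d (ls a))"
  by (subst Bochner_Integration.integral_sum) (use model_mono assms in auto)

lemma model_int1:
  assumes "finite A" "\<And>a. a \<in> A \<Longrightarrow> set (ks a) \<subseteq> IX n d" "\<And>a. a \<in> A \<Longrightarrow> set (ls a) \<subseteq> {1..d}"
  shows "integrable (model n d) (\<lambda>\<omega>. \<Sum>a\<in>A. prod_list (map (fst \<omega>) (ks a)) * prod_list (map (snd \<omega>) (ls a)))"
  by (rule Bochner_Integration.integrable_sum) (use model_mono assms in auto)

lemma model_sum2:
  assumes "finite A" "finite B" "\<And>a b. a \<in> A \<Longrightarrow> b \<in> B \<Longrightarrow> set (ks a b) \<subseteq> IX n d"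
    "\<And>a b. a \<in> A \<Longrightarrow> b \<in> B \<Longrightarrow> set (ls a b) \<subseteq> {1..d}"
  shows "integral\<^sup>L (model n d) (\<lambda>\<omega>. \<Sum>a\<in>A. \<Sum>b\<in>B. prod_list (map (fst \<omega>) (ks a b)) * prod_list (map (snd \<omega>) (ls a b)))
       = (\<Sum>a\<in>A. \<Sum>b\<in>B. EXm n d (ks a b) * EWm d (ls a b))"
  apply (subst Bochner_Integration.integral_sum)
  using model_int1[of B "ks a" n d "ls a" for a] assms apply auto[2]
  apply (intro sum.cong refl)
  apply (rule model_sum1) using assms by auto

lemma model_int2:
  assumes "finite A" "finite B" "\<And>a b. a \<in> A \<Longrightarrow> b \<in> B \<Longrightarrow> set (ks a b) \<subseteq> IX n d"
    "\<And>a b. a \<in> A \<Longrightarrow> b \<in> B \<Longrightarrow> set (ls a b) \<subseteq> {1..d}"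
  shows "integrable (model n d) (\<lambda>\<omega>. \<Sum>a\<in>A. \<Sum>b\<in>B. prod_list (map (fst \<omega>) (ks a b)) * prod_list (map (snd \<omega>) (ls a b)))"
  apply (rule Bochner_Integration.integrable_sum)
  using model_int1[of B "ks a" n d "ls a" for a] assms by auto

lemma model_sum3:
  assumes "finite A" "finite B" "finite C" "\<And>a b c. a \<in> A \<Longrightarrow> b \<in> B \<Longrightarrow> c \<in> C \<Longrightarrow> set (ks a b c) \<subseteq> IX n d"
    "\<And>a b c. a \<in> A \<Longrightarrow> b \<in> B \<Longrightarrow> c \<in> C \<Longrightarrow> set (ls a b c) \<subseteq> {1..d}"
  shows "integral\<^sup>L (model n d) (\<lambda>\<omega>. \<Sum>a\<in>A. \<Sum>b\<in>B. \<Sum>c\<in>C. prod_list (map (fst \<omega>) (ks a b c)) * prod_list (map (snd \<omega>) (ls a b c)))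
       = (\<Sum>a\<in>A. \<Sum>b\<in>B. \<Sum>c\<in>C. EXm n d (ks a b c) * EWm d (ls a b c))"
  apply (subst Bochner_Integration.integral_sum)
  using model_int2[of B C "ks a" n d "ls a" for a] assms apply auto[2]
  apply (intro sum.cong refl)
  apply (rule model_sum2) using assms by auto

lemma mult_if01: "(c::real) * (if P then 1 else 0) = (if P then c else 0)" by simp
lemma if_conj_eq: "(if l = a \<and> l = j then (x::real) else 0) = (if l = a then (if a = j then x else 0) else 0)" by auto
lemma if01_mult: "(if l = a then (1::real) else 0) * (if l = j then 1 else 0) = (if l = a then (if a = j then 1 else 0) else 0)" by auto

context
  fixes n d i i' a b j :: nat
  assumes i: "i \<in> {1..n}" and i': "i' \<in> {1..n}" and a: "a \<in> {1..d}" and b: "b \<in> {1..d}" and j: "j \<in> {1..d}"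
begin

lemma mA: "integral\<^sup>L (model n d) (\<lambda>\<omega>. fst \<omega> (i,a) * fst \<omega> (i,b) * snd \<omega> j) = 0"
proof -
  have "integral\<^sup>L (model n d) (\<lambda>\<omega>. fst \<omega> (i,a) * fst \<omega> (i,b) * snd \<omega> j)
     = integral\<^sup>L (model n d) (\<lambda>\<omega>. prod_list (map (fst \<omega>) [(i,a),(i,b)]) * prod_list (map (snd \<omega>) [j]))"
    by simp
  also have "\<dots> = EXm n d [(i,a),(i,b)] * EWm d [j]" by (rule model_mono) (use i a b j in auto)
  finally show ?thesis using EWm_one j by simp
qed

lemma mB: "integral\<^sup>L (model n d) (\<lambda>\<omega>. fst \<omega> (i,a) * fst \<omega> (i,b) * (\<Sum>l = 1..d. snd \<omega> l * fst \<omega> (i', l)) * fst \<omega> (i',j)) = 0"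
proof -
  have "integral\<^sup>L (model n d) (\<lambda>\<omega>. fst \<omega> (i,a) * fst \<omega> (i,b) * (\<Sum>l = 1..d. snd \<omega> l * fst \<omega> (i', l)) * fst \<omega> (i',j))
     = integral\<^sup>L (model n d) (\<lambda>\<omega>. \<Sum>l\<in>{1..d}. prod_list (map (fst \<omega>) [(i,a),(i,b),(i',l),(i',j)]) * prod_list (map (snd \<omega>) [l]))"
    by (simp add: sum_distrib_left sum_distrib_right mult_ac)
  also have "\<dots> = (\<Sum>l\<in>{1..d}. EXm n d [(i,a),(i,b),(i',l),(i',j)] * EWm d [l])"
    by (rule model_sum1) (use i i' a b j in auto)
  finally show ?thesis using EWm_one by simp
qed

lemma mC: "integral\<^sup>L (model n d) (\<lambda>\<omega>. fst \<omega> (i,a) * (\<Sum>l = 1..d. snd \<omega> l * fst \<omega> (i, l)) * snd \<omega> j) = (if a = j then 1 else 0)"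
proof -
  have "integral\<^sup>L (model n d) (\<lambda>\<omega>. fst \<omega> (i,a) * (\<Sum>l = 1..d. snd \<omega> l * fst \<omega> (i, l)) * snd \<omega> j)
     = integral\<^sup>L (model n d) (\<lambda>\<omega>. \<Sum>l\<in>{1..d}. prod_list (map (fst \<omega>) [(i,a),(i,l)]) * prod_list (map (snd \<omega>) [l,j]))"
    by (simp add: sum_distrib_left sum_distrib_right mult_ac)
  also have "\<dots> = (\<Sum>l\<in>{1..d}. EXm n d [(i,a),(i,l)] * EWm d [l,j])"
    by (rule model_sum1) (use i a j in auto)
  also have "\<dots> = (\<Sum>l\<in>{1..d}. (if l = a then 1 else 0) * (if l = j then 1 else 0))"
    by (intro sum.cong refl) (use i a j in \<open>auto simp: EXm_two EWm_two\<close>)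
  also have "\<dots> = (if a = j then 1 else 0)" using a j by (simp only: if01_mult sum.delta' finite_atLeastAtMost) simp
  finally show ?thesis .
qed

lemma mD: "integral\<^sup>L (model n d) (\<lambda>\<omega>. fst \<omega> (i,a) * (\<Sum>l = 1..d. snd \<omega> l * fst \<omega> (i, l)) * (\<Sum>l = 1..d. snd \<omega> l * fst \<omega> (i', l)) * fst \<omega> (i',j))
   = (if a = j then 1 + (if i = i' then real d + 1 else 0) else 0)"
proof -
  have "integral\<^sup>L (model n d) (\<lambda>\<omega>. fst \<omega> (i,a) * (\<Sum>l = 1..d. snd \<omega> l * fst \<omega> (i, l)) * (\<Sum>l = 1..d. snd \<omega> l * fst \<omega> (i', l)) * fst \<omega> (i',j))
     = integral\<^sup>L (model n d) (\<lambda>\<omega>. \<Sum>l\<in>{1..d}. \<Sum>m\<in>{1..d}. prod_list (map (fst \<omega>) [(i,a),(i,l),(i',m),(i',j)]) * prod_list (map (snd \<omega>) [l,m]))"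
    by (simp add: sum_distrib_left sum_distrib_right mult_ac)
  also have "\<dots> = (\<Sum>l\<in>{1..d}. \<Sum>m\<in>{1..d}. EXm n d [(i,a),(i,l),(i',m),(i',j)] * EWm d [l,m])"
    by (rule model_sum2) (use i i' a j in auto)
  also have "\<dots> = (\<Sum>l\<in>{1..d}. EXm n d [(i,a),(i,l),(i',l),(i',j)])"
  proof (intro sum.cong refl)
    fix l assume l: "l \<in> {1..d}"
    have "(\<Sum>m\<in>{1..d}. EXm n d [(i,a),(i,l),(i',m),(i',j)] * EWm d [l,m])
        = (\<Sum>m\<in>{1..d}. if m = l then EXm n d [(i,a),(i,l),(i',l),(i',j)] else 0)"
      by (intro sum.cong refl) (use l in \<open>auto simp: EWm_two\<close>)
    also have "\<dots> = EXm n d [(i,a),(i,l),(i',l),(i',j)]" using l by simp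
    finally show "(\<Sum>m\<in>{1..d}. EXm n d [(i,a),(i,l),(i',m),(i',j)] * EWm d [l,m]) = EXm n d [(i,a),(i,l),(i',l),(i',j)]" .
  qed
  also have "\<dots> = (\<Sum>l\<in>{1..d}. (if l = a \<and> l = j then 1 else 0) + (if i = i' \<and> l = a \<and> l = j then 1 else 0) + (if i = i' \<and> a = j then 1 else 0))"
    by (intro sum.cong refl) (use i i' a j in \<open>auto simp: EXm_four\<close>)
  also have "\<dots> = (if a = j then 1 + (if i = i' then real d + 1 else 0) else 0)"
    using a j by (cases "a = j"; cases "i = i'") (simp_all add: sum.distrib if_conj_eq mult_if01)
  finally show ?thesis .
qed

lemma mE: "integral\<^sup>L (model n d) (\<lambda>\<omega>. (\<Sum>l = 1..d. snd \<omega> l * fst \<omega> (i, l)) * (\<Sum>l = 1..d. snd \<omega> l * fst \<omega> (i, l)) * snd \<omega> j) = 0"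
proof -
  have "integral\<^sup>L (model n d) (\<lambda>\<omega>. (\<Sum>l = 1..d. snd \<omega> l * fst \<omega> (i, l)) * (\<Sum>l = 1..d. snd \<omega> l * fst \<omega> (i, l)) * snd \<omega> j)
     = integral\<^sup>L (model n d) (\<lambda>\<omega>. \<Sum>l\<in>{1..d}. \<Sum>m\<in>{1..d}. prod_list (map (fst \<omega>) [(i,l),(i,m)]) * prod_list (map (snd \<omega>) [l,m,j]))"
    by (simp add: sum_distrib_left sum_distrib_right mult_ac)
  also have "\<dots> = (\<Sum>l\<in>{1..d}. \<Sum>m\<in>{1..d}. EXm n d [(i,l),(i,m)] * EWm d [l,m,j])"
    by (rule model_sum2) (use i j in auto)
  finally show ?thesis using EWm_three j by simp
qed

lemma mF: "integral\<^sup>L (model n d) (\<lambda>\<omega>. (\<Sum>l = 1..d. snd \<omega> l * fst \<omega> (i, l)) * (\<Sum>l = 1..d. snd \<omega> l * fst \<omega> (i, l)) * (\<Sum>l = 1..d. snd \<omega> l * fst \<omega> (i', l)) * fst \<omega> (i',j)) = 0"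
proof -
  have "integral\<^sup>L (model n d) (\<lambda>\<omega>. (\<Sum>l = 1..d. snd \<omega> l * fst \<omega> (i, l)) * (\<Sum>l = 1..d. snd \<omega> l * fst \<omega> (i, l)) * (\<Sum>l = 1..d. snd \<omega> l * fst \<omega> (i', l)) * fst \<omega> (i',j))
     = integral\<^sup>L (model n d) (\<lambda>\<omega>. \<Sum>l\<in>{1..d}. \<Sum>m\<in>{1..d}. \<Sum>p\<in>{1..d}. prod_list (map (fst \<omega>) [(i,l),(i,m),(i',p),(i',j)]) * prod_list (map (snd \<omega>) [l,m,p]))"
    by (simp add: sum_distrib_left sum_distrib_right mult_ac)
  also have "\<dots> = (\<Sum>l\<in>{1..d}. \<Sum>m\<in>{1..d}. \<Sum>p\<in>{1..d}. EXm n d [(i,l),(i,m),(i',p),(i',j)] * EWm d [l,m,p])"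
    by (rule model_sum3) (use i i' j in auto)
  finally show ?thesis using EWm_three by simp
qed

end

context
  fixes n d j :: nat
  assumes d1: "d \<ge> 1" and n1: "n \<ge> 1" and j: "j \<in> {1..d}"
begin

abbreviation "M \<equiv> model n d"

lemma PM: "prob_space M" by (rule model_prob)

lemma mom_zvec:
  assumes i: "i \<in> {1..n}" and a: "a \<in> {1..d+1}"
  shows "mom M (\<lambda>\<omega>. zvec d \<omega> i a)"
proof (cases "a \<le> d")
  case True
  then have "(\<lambda>\<omega>. zvec d \<omega> i a) = (\<lambda>\<omega>. fst \<omega> (i, a))" by (simp add: zvec_def)
  moreover have "mom M (\<lambda>\<omega>. fst \<omega> (i, a))" by (rule mom_coordX) (use i a True in auto)
  ultimately show ?thesis by simp
next
  case False
  then have "(\<lambda>\<omega>. zvec d \<omega> i a) = (\<lambda>\<omega>. \<Sum>l = 1..d. snd \<omega> l * fst \<omega> (i, l))" by (simp add: zvec_def)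
  moreover have "mom M (\<lambda>\<omega>. \<Sum>l = 1..d. snd \<omega> l * fst \<omega> (i, l))"
    by (rule mom_sum[OF PM]) (use i in \<open>auto intro!: mom_mult mom_coordX mom_coordW\<close>)
  ultimately show ?thesis by simp
qed

lemma mom_Cmat:
  assumes a: "a \<in> {1..d+1}" and b: "b \<in> {1..d+1}"
  shows "mom M (\<lambda>\<omega>. Cmat n d \<omega> a b)"
  unfolding Cmat_def
  by (intro mom_cmult[OF PM] mom_sum[OF PM] mom_mult mom_zvec) (use a b in auto)

definition dl :: "nat \<Rightarrow> nat \<Rightarrow> real" where
  "dl a b = (if (a = d+1 \<and> b = j) \<or> (b = d+1 \<and> a = j) then 1 else 0)"

lemma T1:
  assumes i: "i \<in> {1..n}" and a: "a \<in> {1..d+1}" and b: "b \<in> {1..d+1}"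
  shows "integral\<^sup>L M (\<lambda>\<omega>. zvec d \<omega> i a * zvec d \<omega> i b * snd \<omega> j) = dl a b"
proof -
  consider "a \<le> d" "b \<le> d" | "a \<le> d" "b = d+1" | "a = d+1" "b \<le> d" | "a = d+1" "b = d+1"
    using a b by fastforce
  then show ?thesis
  proof cases
    case 1
    then show ?thesis using mA[OF i i _ _ j, of a b] a b j by (simp add: zvec_def dl_def)
  next
    case 2
    then show ?thesis using mC[OF i i _ _ j, of a a] a b j by (simp add: zvec_def dl_def)
  next
    case 3
    then have "(\<lambda>\<omega>. zvec d \<omega> i a * zvec d \<omega> i b * snd \<omega> j) = (\<lambda>\<omega>. fst \<omega> (i,b) * (\<Sum>l = 1..d. snd \<omega> l * fst \<omega> (i, l)) * snd \<omega> j)"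
      by (simp add: zvec_def mult_ac)
    then show ?thesis using mC[OF i i _ _ j, of b b] 3 a b j by (simp add: dl_def)
  next
    case 4
    then show ?thesis using mE[OF i i _ _ j, of j j] a b j by (simp add: zvec_def dl_def)
  qed
qed

lemma T2:
  assumes i: "i \<in> {1..n}" and i': "i' \<in> {1..n}" and a: "a \<in> {1..d+1}" and b: "b \<in> {1..d+1}"
  shows "integral\<^sup>L M (\<lambda>\<omega>. zvec d \<omega> i a * zvec d \<omega> i b * (zvec d \<omega> i' (d+1) * zvec d \<omega> i' j))
     = dl a b * (1 + (if i = i' then real d + 1 else 0))"
proof -
  have jd: "\<not> (d + 1 \<le> d)" "j \<le> d" using j by auto
  consider "a \<le> d" "b \<le> d" | "a \<le> d" "b = d+1" | "a = d+1" "b \<le> d" | "a = d+1" "b = d+1"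
    using a b by fastforce
  then show ?thesis
  proof cases
    case 1
    then have "(\<lambda>\<omega>. zvec d \<omega> i a * zvec d \<omega> i b * (zvec d \<omega> i' (d+1) * zvec d \<omega> i' j)) =
       (\<lambda>\<omega>. fst \<omega> (i,a) * fst \<omega> (i,b) * (\<Sum>l = 1..d. snd \<omega> l * fst \<omega> (i', l)) * fst \<omega> (i',j))"
      using jd by (simp add: zvec_def mult_ac)
    then show ?thesis using mB[OF i i' _ _ j, of a b] 1 a b j by (simp add: dl_def)
  next
    case 2
    then have "(\<lambda>\<omega>. zvec d \<omega> i a * zvec d \<omega> i b * (zvec d \<omega> i' (d+1) * zvec d \<omega> i' j)) =
       (\<lambda>\<omega>. fst \<omega> (i,a) * (\<Sum>l = 1..d. snd \<omega> l * fst \<omega> (i, l)) * (\<Sum>l = 1..d. snd \<omega> l * fst \<omega> (i', l)) * fst \<omega> (i',j))"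
      using jd by (simp add: zvec_def mult_ac)
    then show ?thesis using mD[OF i i' _ _ j, of a a] 2 a b j by (simp add: dl_def)
  next
    case 3
    then have "(\<lambda>\<omega>. zvec d \<omega> i a * zvec d \<omega> i b * (zvec d \<omega> i' (d+1) * zvec d \<omega> i' j)) =
       (\<lambda>\<omega>. fst \<omega> (i,b) * (\<Sum>l = 1..d. snd \<omega> l * fst \<omega> (i, l)) * (\<Sum>l = 1..d. snd \<omega> l * fst \<omega> (i', l)) * fst \<omega> (i',j))"
      using jd by (simp add: zvec_def mult_ac)
    then show ?thesis using mD[OF i i' _ _ j, of b b] 3 a b j by (simp add: dl_def)
  next
    case 4
    then have "(\<lambda>\<omega>. zvec d \<omega> i a * zvec d \<omega> i b * (zvec d \<omega> i' (d+1) * zvec d \<omega> i' j)) =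
       (\<lambda>\<omega>. (\<Sum>l = 1..d. snd \<omega> l * fst \<omega> (i, l)) * (\<Sum>l = 1..d. snd \<omega> l * fst \<omega> (i, l)) * (\<Sum>l = 1..d. snd \<omega> l * fst \<omega> (i', l)) * fst \<omega> (i',j))"
      using jd by (simp add: zvec_def mult_ac)
    then show ?thesis using mF[OF i i' _ _ j, of j j] 4 a b j by (simp add: dl_def)
  qed
qed


lemma EC1:
  assumes a: "a \<in> {1..d+1}" and b: "b \<in> {1..d+1}"
  shows "integral\<^sup>L M (\<lambda>\<omega>. Cmat n d \<omega> a b * snd \<omega> j) = dl a b"
proof -
  have jj: "j \<in> {1..d}" using j .
  have eq: "(\<lambda>\<omega>. Cmat n d \<omega> a b * snd \<omega> j) = (\<lambda>\<omega>. (1 / real n) * (\<Sum>i\<in>{1..n}. zvec d \<omega> i a * zvec d \<omega> i b * snd \<omega> j))"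
  proof
    fix \<omega>
    have "Cmat n d \<omega> a b * snd \<omega> j = (1 / real n) * ((\<Sum>i\<in>{1..n}. zvec d \<omega> i a * zvec d \<omega> i b) * snd \<omega> j)"
      unfolding Cmat_def by (simp only: mult.assoc)
    also have "\<dots> = (1 / real n) * (\<Sum>i\<in>{1..n}. zvec d \<omega> i a * zvec d \<omega> i b * snd \<omega> j)"
      by (simp only: sum_distrib_right)
    finally show "Cmat n d \<omega> a b * snd \<omega> j = (1 / real n) * (\<Sum>i\<in>{1..n}. zvec d \<omega> i a * zvec d \<omega> i b * snd \<omega> j)" .
  qed
  have int: "integrable M (\<lambda>\<omega>. zvec d \<omega> i a * zvec d \<omega> i b * snd \<omega> j)" if "i \<in> {1..n}" for i
    by (intro mom_integrable mom_mult mom_zvec mom_coordW that a b jj)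
  have "integral\<^sup>L M (\<lambda>\<omega>. Cmat n d \<omega> a b * snd \<omega> j) = (1 / real n) * (\<Sum>i\<in>{1..n}. integral\<^sup>L M (\<lambda>\<omega>. zvec d \<omega> i a * zvec d \<omega> i b * snd \<omega> j))"
    unfolding eq integral_mult_right_zero by (subst Bochner_Integration.integral_sum) (use int in auto)
  also have "\<dots> = (1 / real n) * (\<Sum>i\<in>{1..n}. dl a b)"
    by (intro arg_cong[where f="\<lambda>x. (1 / real n) * x"] sum.cong refl T1 a b) auto
  also have "\<dots> = dl a b" using n1 by simp
  finally show ?thesis .
qed

lemma EC2:
  assumes a: "a \<in> {1..d+1}" and b: "b \<in> {1..d+1}"
  shows "integral\<^sup>L M (\<lambda>\<omega>. Cmat n d \<omega> a b * Cmat n d \<omega> (d+1) j) = dl a b * (1 + (real d + 1) / real n)"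
proof -
  have jj: "j \<in> {1..d+1}" "d + 1 \<in> {1..d+1}" using j by auto
  have eq: "(\<lambda>\<omega>. Cmat n d \<omega> a b * Cmat n d \<omega> (d+1) j) = (\<lambda>\<omega>. (1 / real n * (1 / real n)) *
     (\<Sum>i\<in>{1..n}. \<Sum>i'\<in>{1..n}. zvec d \<omega> i a * zvec d \<omega> i b * (zvec d \<omega> i' (d+1) * zvec d \<omega> i' j)))"
  proof
    fix \<omega>
    have "Cmat n d \<omega> a b * Cmat n d \<omega> (d+1) j = (1 / real n * (1 / real n)) *
      ((\<Sum>i\<in>{1..n}. zvec d \<omega> i a * zvec d \<omega> i b) * (\<Sum>i'\<in>{1..n}. zvec d \<omega> i' (d+1) * zvec d \<omega> i' j))"
      unfolding Cmat_def by (simp only: mult_ac)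
    also have "\<dots> = (1 / real n * (1 / real n)) *
     (\<Sum>i\<in>{1..n}. \<Sum>i'\<in>{1..n}. zvec d \<omega> i a * zvec d \<omega> i b * (zvec d \<omega> i' (d+1) * zvec d \<omega> i' j))"
      by (simp only: sum_product)
    finally show "Cmat n d \<omega> a b * Cmat n d \<omega> (d+1) j = (1 / real n * (1 / real n)) *
     (\<Sum>i\<in>{1..n}. \<Sum>i'\<in>{1..n}. zvec d \<omega> i a * zvec d \<omega> i b * (zvec d \<omega> i' (d+1) * zvec d \<omega> i' j))" .
  qed
  have int: "integrable M (\<lambda>\<omega>. zvec d \<omega> i a * zvec d \<omega> i b * (zvec d \<omega> i' (d+1) * zvec d \<omega> i' j))"
    if "i \<in> {1..n}" "i' \<in> {1..n}" for i i'
    by (intro mom_integrable mom_mult mom_zvec that a b jj)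
  have int2: "integrable M (\<lambda>\<omega>. \<Sum>i'\<in>{1..n}. zvec d \<omega> i a * zvec d \<omega> i b * (zvec d \<omega> i' (d+1) * zvec d \<omega> i' j))"
    if "i \<in> {1..n}" for i
    by (rule Bochner_Integration.integrable_sum) (use int that in auto)
  have "integral\<^sup>L M (\<lambda>\<omega>. Cmat n d \<omega> a b * Cmat n d \<omega> (d+1) j) = (1 / real n * (1 / real n)) *
     (\<Sum>i\<in>{1..n}. \<Sum>i'\<in>{1..n}. integral\<^sup>L M (\<lambda>\<omega>. zvec d \<omega> i a * zvec d \<omega> i b * (zvec d \<omega> i' (d+1) * zvec d \<omega> i' j)))"
  proof -
    have inner: "integral\<^sup>L M (\<lambda>\<omega>. \<Sum>i'\<in>{1..n}. zvec d \<omega> i a * zvec d \<omega> i b * (zvec d \<omega> i' (d+1) * zvec d \<omega> i' j))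
       = (\<Sum>i'\<in>{1..n}. integral\<^sup>L M (\<lambda>\<omega>. zvec d \<omega> i a * zvec d \<omega> i b * (zvec d \<omega> i' (d+1) * zvec d \<omega> i' j)))"
      if "i \<in> {1..n}" for i
      by (rule Bochner_Integration.integral_sum) (use int that in auto)
    have "integral\<^sup>L M (\<lambda>\<omega>. \<Sum>i\<in>{1..n}. \<Sum>i'\<in>{1..n}. zvec d \<omega> i a * zvec d \<omega> i b * (zvec d \<omega> i' (d+1) * zvec d \<omega> i' j))
      = (\<Sum>i\<in>{1..n}. integral\<^sup>L M (\<lambda>\<omega>. \<Sum>i'\<in>{1..n}. zvec d \<omega> i a * zvec d \<omega> i b * (zvec d \<omega> i' (d+1) * zvec d \<omega> i' j)))"
      by (rule Bochner_Integration.integral_sum) (use int2 in auto)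
    also have "\<dots> = (\<Sum>i\<in>{1..n}. \<Sum>i'\<in>{1..n}. integral\<^sup>L M (\<lambda>\<omega>. zvec d \<omega> i a * zvec d \<omega> i b * (zvec d \<omega> i' (d+1) * zvec d \<omega> i' j)))"
      by (rule sum.cong[OF refl inner])
    finally show ?thesis unfolding eq integral_mult_right_zero by simp
  qed
  also have "\<dots> = (1 / real n * (1 / real n)) * (\<Sum>i\<in>{1..n}. \<Sum>i'\<in>{1..n}. dl a b * (1 + (if i = i' then real d + 1 else 0)))"
    by (intro arg_cong[where f="\<lambda>x. (1 / real n * (1 / real n)) * x"] sum.cong refl T2 a b) auto
  also have "(\<Sum>i\<in>{1..n}. \<Sum>i'\<in>{1..n}. dl a b * (1 + (if i = i' then real d + 1 else 0)))
      = (\<Sum>i\<in>{1..n}. dl a b * real n + dl a b * (real d + 1))"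
  proof (intro sum.cong refl)
    fix i assume "i \<in> {1..n}"
    then show "(\<Sum>i'\<in>{1..n}. dl a b * (1 + (if i = i' then real d + 1 else 0))) = dl a b * real n + dl a b * (real d + 1)"
      by (simp add: distrib_left sum.distrib if_distrib[of "\<lambda>x. dl a b * x"])
  qed
  also have "\<dots> = real n * (dl a b * real n + dl a b * (real d + 1))" by simp
  also have "(1 / real n * (1 / real n)) * (real n * (dl a b * real n + dl a b * (real d + 1))) = dl a b * (1 + (real d + 1) / real n)"
    using n1 by (simp add: field_simps power2_eq_square)
  finally show ?thesis .
qed

definition cc :: real where "cc = 1 / ((real n - 1) / real n + (real d + 2) / real n)"

lemma cc_eq: "cc * (1 + (real d + 1) / real n) = 1"
proof -
  have np: "real n > 0" using n1 by simp
  have "(real n - 1) / real n + (real d + 2) / real n = (real n + real d + 1) / real n"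
    using np by (simp add: field_simps)
  moreover have "1 + (real d + 1) / real n = (real n + real d + 1) / real n"
    using np by (simp add: field_simps)
  moreover have "real n + real d + 1 > 0" using np by simp
  ultimately show ?thesis unfolding cc_def using np by simp
qed

lemma Eg:
  assumes a: "a \<in> {1..d+1}" and b: "b \<in> {1..d+1}"
  shows "integral\<^sup>L M (\<lambda>\<omega>. Cmat n d \<omega> a b * (snd \<omega> j - cc * Cmat n d \<omega> (d+1) j)) = 0"
proof -
  have jj: "j \<in> {1..d+1}" "d + 1 \<in> {1..d+1}" "j \<in> {1..d}" using j by auto
  have i1: "integrable M (\<lambda>\<omega>. Cmat n d \<omega> a b * snd \<omega> j)"
    by (intro mom_integrable mom_mult mom_Cmat mom_coordW a b jj)
  have i2: "integrable M (\<lambda>\<omega>. cc * (Cmat n d \<omega> a b * Cmat n d \<omega> (d+1) j))"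
    by (intro mom_integrable mom_cmult[OF PM] mom_mult mom_Cmat a b jj)
  have "(\<lambda>\<omega>. Cmat n d \<omega> a b * (snd \<omega> j - cc * Cmat n d \<omega> (d+1) j)) =
     (\<lambda>\<omega>. Cmat n d \<omega> a b * snd \<omega> j - cc * (Cmat n d \<omega> a b * Cmat n d \<omega> (d+1) j))"
    by (simp add: algebra_simps)
  then have "integral\<^sup>L M (\<lambda>\<omega>. Cmat n d \<omega> a b * (snd \<omega> j - cc * Cmat n d \<omega> (d+1) j)) =
     integral\<^sup>L M (\<lambda>\<omega>. Cmat n d \<omega> a b * snd \<omega> j) - cc * integral\<^sup>L M (\<lambda>\<omega>. Cmat n d \<omega> a b * Cmat n d \<omega> (d+1) j)"
    using Bochner_Integration.integral_diff[OF i1 i2] by simp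
  also have "\<dots> = dl a b - dl a b * (cc * (1 + (real d + 1) / real n))"
    using EC1[OF a b] EC2[OF a b] by simp
  also have "\<dots> = 0" by (simp add: cc_eq)
  finally show ?thesis .
qed


lemma mult_neg_if01: "(x::real) * (- c * (if P then 1 else 0)) = (if P then - c * x else 0)" by simp

lemma frob_Xs: "frob d (Cmat n d \<omega>) (\<lambda>p q. - cc * Eunit (d+1) j p q) = - cc * Cmat n d \<omega> (d+1) j"
proof -
  have jj: "j \<in> {1..d+1}" using j by auto
  have inner: "(\<Sum>b = 1..d+1. Cmat n d \<omega> a b * (- cc * Eunit (d+1) j a b)) = (if a = d+1 then - cc * Cmat n d \<omega> a j else 0)" for a
  proof (cases "a = d+1")
    case True
    then have "(\<Sum>b = 1..d+1. Cmat n d \<omega> a b * (- cc * Eunit (d+1) j a b)) = (\<Sum>b = 1..d+1. if b = j then - cc * Cmat n d \<omega> a b else 0)"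
      by (intro sum.cong refl) (simp add: Eunit_def)
    also have "\<dots> = - cc * Cmat n d \<omega> a j" using jj by (simp only: sum.delta finite_atLeastAtMost) simp
    finally show ?thesis using True by simp
  next
    case False
    then show ?thesis by (simp add: Eunit_def)
  qed
  have "frob d (Cmat n d \<omega>) (\<lambda>p q. - cc * Eunit (d+1) j p q) = (\<Sum>a = 1..d+1. if a = d+1 then - cc * Cmat n d \<omega> a j else 0)"
    unfolding frob_def using inner by simp
  also have "\<dots> = - cc * Cmat n d \<omega> (d+1) j" by (simp only: sum.delta finite_atLeastAtMost) simp
  finally show ?thesis .
qed

lemma main: "fobj n d j (\<lambda>p q. - cc * Eunit (d+1) j p q) \<le> fobj n d j X"
proof -
  define Xs where "Xs = (\<lambda>p q. - cc * Eunit (d+1) j p q)"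
  define Y where "Y = (\<lambda>p q. X p q - Xs p q)"
  define g where "g = (\<lambda>\<omega>. snd \<omega> j - cc * Cmat n d \<omega> (d+1) j)"
  define LY where "LY = (\<lambda>\<omega>. frob d (Cmat n d \<omega>) Y)"
  have jj: "j \<in> {1..d+1}" "d + 1 \<in> {1..d+1}" "j \<in> {1..d}" using j by auto
  have gX: "frob d (Cmat n d \<omega>) Xs + snd \<omega> j = g \<omega>" for \<omega>
    using frob_Xs[of \<omega>] unfolding g_def Xs_def by simp
  have spl: "frob d (Cmat n d \<omega>) X + snd \<omega> j = LY \<omega> + g \<omega>" for \<omega>
  proof -
    have "LY \<omega> = frob d (Cmat n d \<omega>) X - frob d (Cmat n d \<omega>) Xs"
      unfolding LY_def Y_def frob_def by (simp add: right_diff_distrib sum_subtractf)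
    then show ?thesis using gX[of \<omega>] by simp
  qed
  have mg: "mom M g" unfolding g_def
    by (intro mom_diff[OF PM] mom_coordW jj mom_cmult[OF PM] mom_Cmat)
  have mLY: "mom M LY" unfolding LY_def frob_def
    by (intro mom_sum[OF PM] mom_mult mom_Cmat mom_const[OF PM] finite_atLeastAtMost) auto
  have iLY2: "integrable M (\<lambda>\<omega>. (LY \<omega>)\<^sup>2)" by (intro mom_integrable mom_pow2 mLY)
  have ig2: "integrable M (\<lambda>\<omega>. (g \<omega>)\<^sup>2)" by (intro mom_integrable mom_pow2 mg)
  have iLg: "integrable M (\<lambda>\<omega>. 2 * (LY \<omega> * g \<omega>))" by (intro mom_integrable mom_cmult[OF PM] mom_mult mLY mg)
  have ECg: "integral\<^sup>L M (\<lambda>\<omega>. Cmat n d \<omega> a b * g \<omega>) = 0" if "a \<in> {1..d+1}" "b \<in> {1..d+1}" for a b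
    unfolding g_def using Eg[OF that] .
  have iCg: "integrable M (\<lambda>\<omega>. Y a b * (Cmat n d \<omega> a b * g \<omega>))" if "a \<in> {1..d+1}" "b \<in> {1..d+1}" for a b
    by (intro mom_integrable mom_cmult[OF PM] mom_mult mom_Cmat mg that)
  have eLg: "(\<lambda>\<omega>. LY \<omega> * g \<omega>) = (\<lambda>\<omega>. \<Sum>a\<in>{1..d+1}. \<Sum>b\<in>{1..d+1}. Y a b * (Cmat n d \<omega> a b * g \<omega>))"
    unfolding LY_def frob_def sum_distrib_right by (simp only: mult_ac)
  have ELg: "integral\<^sup>L M (\<lambda>\<omega>. LY \<omega> * g \<omega>) = 0"
  proof -
    have inner: "integral\<^sup>L M (\<lambda>\<omega>. \<Sum>b\<in>{1..d+1}. Y a b * (Cmat n d \<omega> a b * g \<omega>)) = 0" if a: "a \<in> {1..d+1}" for a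
    proof -
      have "integral\<^sup>L M (\<lambda>\<omega>. \<Sum>b\<in>{1..d+1}. Y a b * (Cmat n d \<omega> a b * g \<omega>))
          = (\<Sum>b\<in>{1..d+1}. integral\<^sup>L M (\<lambda>\<omega>. Y a b * (Cmat n d \<omega> a b * g \<omega>)))"
        by (rule Bochner_Integration.integral_sum) (use iCg a in auto)
      also have "\<dots> = 0" using ECg a by simp
      finally show ?thesis .
    qed
    have "integral\<^sup>L M (\<lambda>\<omega>. \<Sum>a\<in>{1..d+1}. \<Sum>b\<in>{1..d+1}. Y a b * (Cmat n d \<omega> a b * g \<omega>))
        = (\<Sum>a\<in>{1..d+1}. integral\<^sup>L M (\<lambda>\<omega>. \<Sum>b\<in>{1..d+1}. Y a b * (Cmat n d \<omega> a b * g \<omega>)))"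
      by (rule Bochner_Integration.integral_sum) (use iCg in \<open>auto intro!: Bochner_Integration.integrable_sum\<close>)
    also have "\<dots> = 0" using inner by simp
    finally show ?thesis unfolding eLg .
  qed
  have "fobj n d j X = integral\<^sup>L M (\<lambda>\<omega>. (LY \<omega> + g \<omega>)\<^sup>2)"
    unfolding fobj_def spl ..
  also have "(\<lambda>\<omega>. (LY \<omega> + g \<omega>)\<^sup>2) = (\<lambda>\<omega>. ((LY \<omega>)\<^sup>2 + 2 * (LY \<omega> * g \<omega>)) + (g \<omega>)\<^sup>2)"
    by (simp add: power2_eq_square algebra_simps)
  also have "integral\<^sup>L M \<dots> = (integral\<^sup>L M (\<lambda>\<omega>. (LY \<omega>)\<^sup>2) + integral\<^sup>L M (\<lambda>\<omega>. 2 * (LY \<omega> * g \<omega>))) + integral\<^sup>L M (\<lambda>\<omega>. (g \<omega>)\<^sup>2)"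
    using iLY2 iLg ig2 by (simp add: Bochner_Integration.integral_add)
  also have "integral\<^sup>L M (\<lambda>\<omega>. 2 * (LY \<omega> * g \<omega>)) = 0" using ELg by simp
  finally have fX: "fobj n d j X = integral\<^sup>L M (\<lambda>\<omega>. (LY \<omega>)\<^sup>2) + integral\<^sup>L M (\<lambda>\<omega>. (g \<omega>)\<^sup>2)" by simp
  have fXs: "fobj n d j Xs = integral\<^sup>L M (\<lambda>\<omega>. (g \<omega>)\<^sup>2)"
    unfolding fobj_def gX ..
  have "0 \<le> integral\<^sup>L M (\<lambda>\<omega>. (LY \<omega>)\<^sup>2)" by (rule Bochner_Integration.integral_nonneg) simp
  then show ?thesis using fX fXs unfolding Xs_def by simp
qed

lemma main2: "fobj n d j (\<lambda>p q. - (1 / ((real n - 1) / real n + (real d + 2) / real n)) * Eunit (d+1) j p q) \<le> fobj n d j X"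
  using main[of X] unfolding cc_def .

end

theorem lemma2:
  fixes n d j :: nat
  assumes "d \<ge> 1" and "n \<ge> 1" and "j \<in> {1..d}"
  shows "\<forall>X. fobj n d j
           (\<lambda>p q. - (1 / ((real n - 1) / real n + (real d + 2) / real n)) * Eunit (d+1) j p q)
         \<le> fobj n d j X"
proof (intro allI)
  fix X
  show "fobj n d j (\<lambda>p q. - (1 / ((real n - 1) / real n + (real d + 2) / real n)) * Eunit (d+1) j p q) \<le> fobj n d j X"
    by (rule main2[OF assms])
qed

end
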